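(* Let $v\in\{1,\dots,m\}$, let $B\subseteq\mathcal{L}^{mn}$ be a ball, let $B''\subseteq B$ be a ball and $\mu_{v-1}>0$ such that $\|M_{v-1}(A)\|_\infty>\rho(B)\,\mu_{v-1}\,M_{v-2}(B'')$ for all $A\in B''$. If $B'\subseteq B''$ is a ball with $\rho(B')<\tfrac12\mu_{v-1}\rho(B'')$, then $\|M_{v-1}(A')\|_\infty>\tfrac12 M_{v-1}(B')$ for every $A'\in B'$.
   Context: $\mathbb{F}$ is the finite field with $k$ elements, $\mathcal{L}=\mathbb{F}((X^{-1}))$ with absolute value $|x|=k^{n}$ where $X^n$ is the leading term of $x$, $\|\mathbf{x}\|_\infty=\max_i|x_i|$; $m\times n$ matrices are identified with $\mathcal{L}^{mn}$; balls are closed balls $\{\|A-C\|_\infty\le\rho\}$ with radius $\rho(\cdot)$. For $A\in\mathcal{L}^{mn}$ let $\tilde A^*=\begin{pmatrix}A^T&I_n\\ I_m&0\end{pmatrix}$ and $\mathrm{col}_l(\tilde A^* )$ its $l$-th column; $\mathbf{x}\cdot\mathbf{y}=\sum x_iy_i$. Fix vectors $\mathbf{y}_1,\dots,\mathbf{y}_m\in\mathcal{L}^{m+n}$ that are orthonormal (i.e. $\mathbf{y}_i\cdot\mathbf{y}_j=\delta_{ij}$ and $\|\sum_it_i\mathbf{y}_i\|_\infty=\max_i|t_i|$ for all $t_i\in\mathcal{L}$). Let $G(A)$ be the $m\times m$ matrix with entries $G(A)_{il}=\mathbf{y}_i\cdot\mathrm{col}_l(\tilde A^* )$. For $1\le v\le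 m$, $M_v(A)\in\mathcal{L}^{\binom{m}{v}^2}$ is the vector of all $v\times v$ minors of $G(A)$ in a fixed order; $M_0(A)=M_{-1}(A)=(1)\in\mathcal{L}$. For $K\subseteq\mathcal{L}^{mn}$, $M_v(K)=\max_{A\in K}\|M_v(A)\|_\infty$. *)

theory Defs
  imports "HOL-Computational_Algebra.Formal_Laurent_Series"
          "Jordan_Normal_Form.DL_Rank_Submatrix"
begin

text \<open>The field L = F((X^{-1})) over the finite field F = 'a (k = card (UNIV :: 'a set) elements) is
  represented by formal Laurent series in t = X^{-1} with finitely many negative powers
  of t ('a fls).  The leading term X^n of x corresponds to t^{-n}, i.e. n = - fls_subdegree x.\<close>

definition absL :: "'a::{field,finite} fls \<Rightarrow> real" where
  "absL x = (if x = 0 then 0 else real (card (UNIV :: 'a set)) powr (- of_int (fls_subdegree x)))"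

definition vnormL :: "'a::{field,finite} fls vec \<Rightarrow> real" where
  "vnormL x = Max (insert 0 {absL (x $ i) | i. i < dim_vec x})"

definition mnormL :: "'a::{field,finite} fls mat \<Rightarrow> real" where
  "mnormL A = Max (insert 0 {absL (A $$ (i,j)) | i j. i < dim_row A \<and> j < dim_col A})"

definition radL :: "'a::{field,finite} itself \<Rightarrow> int \<Rightarrow> real" where
  "radL _ z = real (card (UNIV :: 'a set)) powr of_int z"

definition ballL :: "nat \<Rightarrow> nat \<Rightarrow> 'a::{field,finite} fls mat \<Rightarrow> int \<Rightarrow> 'a fls mat set" where
  "ballL m n C z = {A \<in> carrier_mat m n. mnormL (A - C) \<le> radL TYPE('a) z}"

definition tildeAstar :: "nat \<Rightarrow> nat \<Rightarrow> 'a::field fls mat \<Rightarrow> 'a fls mat" where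
  "tildeAstar m n A = four_block_mat (transpose_mat A) (1\<^sub>m n) (1\<^sub>m m) (0\<^sub>m m n)"

definition Gmat :: "(nat \<Rightarrow> 'a::field fls vec) \<Rightarrow> nat \<Rightarrow> nat \<Rightarrow> 'a fls mat \<Rightarrow> 'a fls mat" where
  "Gmat y m n A = mat m m (\<lambda>(i,l). y i \<bullet> col (tildeAstar m n A) l)"

definition MnormL :: "(nat \<Rightarrow> 'a::{field,finite} fls vec) \<Rightarrow> nat \<Rightarrow> nat \<Rightarrow> int \<Rightarrow> 'a fls mat \<Rightarrow> real" where
  "MnormL y m n j A = (if j \<le> 0 then 1 else
     Max {absL (det (submatrix (Gmat y m n A) I J)) | I J.
            I \<subseteq> {..<m} \<and> J \<subseteq> {..<m} \<and> card I = nat j \<and> card J = nat j})"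

definition MsetL :: "(nat \<Rightarrow> 'a::{field,finite} fls vec) \<Rightarrow> nat \<Rightarrow> nat \<Rightarrow> int \<Rightarrow> 'a fls mat set \<Rightarrow> real" where
  "MsetL y m n j K = (SUP A\<in>K. MnormL y m n j A)"

definition orthonormalL :: "nat \<Rightarrow> nat \<Rightarrow> (nat \<Rightarrow> 'a::{field,finite} fls vec) \<Rightarrow> bool" where
  "orthonormalL m n y \<longleftrightarrow>
     (\<forall>i<m. y i \<in> carrier_vec (m + n)) \<and>
     (\<forall>i<m. \<forall>j<m. y i \<bullet> y j = (if i = j then 1 else 0)) \<and>
     (\<forall>t :: nat \<Rightarrow> 'a fls. vnormL (vec (m + n) (\<lambda>k. \<Sum>i<m. t i * (y i $ k)))
                         = Max (insert 0 {absL (t i) | i. i < m}))"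

end

theory Submission
  imports Defs
begin

lemma cardU_ge2: "real (card (UNIV :: 'a::{field,finite} set)) \<ge> 2"
proof -
  have "{0::'a, 1} \<subseteq> UNIV" by simp
  hence "card {0::'a,1} \<le> card (UNIV::'a set)" by (intro card_mono) auto
  thus ?thesis by simp
qed

lemma absL_nonneg: "absL x \<ge> 0"
  unfolding absL_def by auto

lemma absL_zero[simp]: "absL 0 = 0" unfolding absL_def by simp

lemma absL_eq0: "absL (x::'a::{field,finite} fls) = 0 \<longleftrightarrow> x = 0"
  using cardU_ge2[where 'a='a] unfolding absL_def by auto

lemma absL_mult: "absL ((x::'a::{field,finite} fls) * y) = absL x * absL y"
proof (cases "x = 0 \<or> y = 0")
  case True thus ?thesis by auto
next
  case False
  thus ?thesis unfolding absL_def using cardU_ge2[where 'a='a]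
    by (auto simp: powr_add[symmetric] algebra_simps)
qed

lemma absL_uminus: "absL (- (x::'a::{field,finite} fls)) = absL x"
  unfolding absL_def by auto

lemma absL_one[simp]: "absL (1::'a::{field,finite} fls) = 1"
  unfolding absL_def by simp

lemma absL_add: "absL ((x::'a::{field,finite} fls) + y) \<le> max (absL x) (absL y)"
proof (cases "x = 0 \<or> y = 0 \<or> x + y = 0")
  case True thus ?thesis using absL_nonneg[of x] absL_nonneg[of y] by auto
next
  case False
  hence "fls_subdegree (x+y) \<ge> min (fls_subdegree x) (fls_subdegree y)"
    by (intro fls_plus_subdegree) auto
  hence "real (card (UNIV :: 'a set)) powr (- of_int (fls_subdegree (x+y)))
     \<le> real (card (UNIV :: 'a set)) powr (- of_int (min (fls_subdegree x) (fls_subdegree y)))"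
    using cardU_ge2[where 'a='a] by (intro powr_mono) auto
  thus ?thesis using False unfolding absL_def
    by (cases "fls_subdegree x \<le> fls_subdegree y") (auto simp: min_def)
qed

lemma absL_diff: "absL ((x::'a::{field,finite} fls) - y) \<le> max (absL x) (absL y)"
  using absL_add[of x "-y"] by (simp add: absL_uminus)

lemma absL_sum_le:
  assumes "\<And>i. i \<in> S \<Longrightarrow> absL ((f i)::'a::{field,finite} fls) \<le> b" "b \<ge> 0"
  shows "absL (sum f S) \<le> b"
  using assms
proof (induction S rule: infinite_finite_induct)
  case (insert x F)
  have "absL (sum f (insert x F)) = absL (f x + sum f F)" using insert by simp
  also have "\<dots> \<le> max (absL (f x)) (absL (sum f F))" by (rule absL_add)
  also have "\<dots> \<le> b" using insert by auto
  finally show ?case .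
qed auto

lemma absL_prod_le:
  assumes "\<And>i. i \<in> S \<Longrightarrow> absL ((f i)::'a::{field,finite} fls) \<le> b" "b \<ge> 0" "finite S"
  shows "absL (prod f S) \<le> b ^ card S"
  using assms(3,1)
proof (induction S rule: finite_induct)
  case (insert x F)
  have "absL (prod f (insert x F)) = absL (f x) * absL (prod f F)" using insert by (simp add: absL_mult)
  also have "\<dots> \<le> b * b ^ card F" using insert assms(2)
    by (intro mult_mono) (auto simp: absL_nonneg)
  finally show ?case using insert by simp
qed simp

lemma absL_signof: "absL (signof p :: 'a::{field,finite} fls) = 1"
  by (simp add: sign_def absL_uminus)

lemma mnormL_fin: "finite {absL (A $$ (i,j)) | i j. i < dim_row A \<and> j < dim_col A}"
proof -
  have "{absL (A $$ (i,j)) | i j. i < dim_row A \<and> j < dim_col A}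
     = (\<lambda>(i,j). absL (A $$ (i,j))) ` ({..<dim_row A} \<times> {..<dim_col A})" by auto
  thus ?thesis by simp
qed

lemma mnormL_nonneg: "mnormL A \<ge> 0"
  unfolding mnormL_def using mnormL_fin[of A] by (intro Max_ge) auto

lemma mnormL_entry: "i < dim_row A \<Longrightarrow> j < dim_col A \<Longrightarrow> absL (A $$ (i,j)) \<le> mnormL A"
  unfolding mnormL_def using mnormL_fin by (intro Max_ge) auto

lemma mnormL_le: "(\<And>i j. i < dim_row A \<Longrightarrow> j < dim_col A \<Longrightarrow> absL (A $$ (i,j)) \<le> r) \<Longrightarrow> r \<ge> 0
   \<Longrightarrow> mnormL A \<le> r"
  unfolding mnormL_def using mnormL_fin[of A] by (subst Max_le_iff) auto

lemma det_bound:
  assumes P: "P \<in> carrier_mat d d" and b: "\<And>i j. i < d \<Longrightarrow> j < d \<Longrightarrow> absL ((P $$ (i,j))::'a::{field,finite} fls) \<le> K"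
    and K: "K \<ge> 0"
  shows "absL (det P) \<le> K ^ d"
proof -
  have "det P = (\<Sum>p \<in> {p. p permutes {0..<d}}. signof p * (\<Prod>i = 0..<d. P $$ (i, p i)))"
    by (rule det_def'[OF P])
  also have "absL \<dots> \<le> K ^ d"
  proof (rule absL_sum_le)
    fix p assume "p \<in> {p. p permutes {0..<d}}"
    hence pd: "\<And>i. i < d \<Longrightarrow> p i < d" using permutes_in_image by fastforce
    have "absL (\<Prod>i = 0..<d. P $$ (i, p i)) \<le> K ^ card {0..<d}"
      by (rule absL_prod_le) (auto intro!: b pd K)
    thus "absL (signof p * (\<Prod>i = 0..<d. P $$ (i, p i))) \<le> K ^ d"
      by (simp add: absL_mult absL_signof)
  qed (simp add: K)
  finally show ?thesis .
qed

lemma pick_remove: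
  assumes fin: "finite I" and a: "a < card I" and b: "b < card I - 1"
  shows "pick (I - {pick I a}) b = pick I (if b < a then b else Suc b)"
proof -
  define b' where "b' = (if b < a then b else Suc b)"
  define x where "x = pick I b'"
  have b'lt: "b' < card I" using a b unfolding b'_def by auto
  have xI: "x \<in> I" unfolding x_def using pick_in_set[of b' I] b'lt by auto
  have ne: "b' \<noteq> a" unfolding b'_def by auto
  have xne: "x \<noteq> pick I a"
  proof
    assume "x = pick I a"
    thus False using ne pick_mono[of b' I a] pick_mono[of a I b'] a b'lt unfolding x_def
      by (cases "b' < a") auto
  qed
  have cx: "card {y \<in> I. y < x} = b'" unfolding x_def using card_pick[of b' I] b'lt by auto
  have "card {y \<in> I - {pick I a}. y < x} = b"
  proof (cases "b < a")
    case True
    hence "x < pick I a" unfolding x_def b'_def using pick_mono[of a I b] a by auto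
    hence "{y \<in> I - {pick I a}. y < x} = {y \<in> I. y < x}" by auto
    thus ?thesis using cx True unfolding b'_def by simp
  next
    case False
    hence "pick I a < x" unfolding x_def b'_def using pick_mono[of "Suc b" I a] b'lt b'_def by auto
    hence eq: "{y \<in> I - {pick I a}. y < x} = {y \<in> I. y < x} - {pick I a}" by auto
    have "pick I a \<in> {y \<in> I. y < x}" using \<open>pick I a < x\<close> pick_in_set[of a I] a by auto
    hence "card ({y \<in> I. y < x} - {pick I a}) = b' - 1" using cx fin by (subst card_Diff_singleton) auto
    thus ?thesis using eq False unfolding b'_def by simp
  qed
  hence "pick (I - {pick I a}) b = pick (I - {pick I a}) (card {y \<in> I - {pick I a}. y < x})" by simp
  also have "\<dots> = x" using xI xne by (intro pick_card_in_set) auto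
  finally show ?thesis unfolding x_def b'_def .
qed

lemma card_sub_range: "I \<subseteq> {..<m} \<Longrightarrow> {i. i < m \<and> i \<in> I} = I" by auto

lemma mat_delete_submatrix:
  assumes G: "G \<in> carrier_mat m m" and I: "I \<subseteq> {..<m}" and J: "J \<subseteq> {..<m}"
    and cI: "card I = d" and cJ: "card J = d" and a: "a < d" and c: "c < d"
  shows "mat_delete (submatrix G I J) a c = submatrix G (I - {pick I a}) (J - {pick J c})"
proof -
  have finI: "finite I" and finJ: "finite J" using I J finite_subset by auto
  have pa: "pick I a \<in> I" using pick_in_set[of a I] a cI by auto
  have pc: "pick J c \<in> J" using pick_in_set[of c J] c cJ by auto
  have I': "I - {pick I a} \<subseteq> {..<m}" and J': "J - {pick J c} \<subseteq> {..<m}" using I J by auto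
  have cI': "card (I - {pick I a}) = d - 1" using pa finI cI by simp
  have cJ': "card (J - {pick J c}) = d - 1" using pc finJ cJ by simp
  have e1: "card {i. i < dim_row G \<and> i \<in> I} = d" "card {i. i < dim_col G \<and> i \<in> J} = d"
    "card {i. i < dim_row G \<and> i \<in> I - {pick I a}} = d - 1" "card {i. i < dim_col G \<and> i \<in> J - {pick J c}} = d - 1"
    using G card_sub_range[OF I] card_sub_range[OF J] card_sub_range[OF I'] card_sub_range[OF J'] cI cJ cI' cJ' by auto
  have dS: "dim_row (submatrix G I J) = d" "dim_col (submatrix G I J) = d"
    unfolding dim_submatrix e1 by auto
  show ?thesis
  proof (rule eq_matI)
    show dr: "dim_row (mat_delete (submatrix G I J) a c) = dim_row (submatrix G (I - {pick I a}) (J - {pick J c}))"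
      by (simp only: mat_delete_dim dS dim_submatrix e1)
    show dc: "dim_col (mat_delete (submatrix G I J) a c) = dim_col (submatrix G (I - {pick I a}) (J - {pick J c}))"
      by (simp only: mat_delete_dim dS dim_submatrix e1)
    fix i j assume i: "i < dim_row (submatrix G (I - {pick I a}) (J - {pick J c}))"
      and j: "j < dim_col (submatrix G (I - {pick I a}) (J - {pick J c}))"
    have i': "i < d - 1" and j': "j < d - 1" using i j unfolding dim_submatrix e1 by auto
    have "mat_delete (submatrix G I J) a c $$ (i, j)
       = submatrix G I J $$ (if i < a then i else Suc i, if j < c then j else Suc j)"
      unfolding mat_delete_def using i' j' dS by auto
    also have "\<dots> = G $$ (pick I (if i < a then i else Suc i), pick J (if j < c then j else Suc j))"
      using i' j' e1 by (intro submatrix_index) auto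
    also have "\<dots> = G $$ (pick (I - {pick I a}) i, pick (J - {pick J c}) j)"
      using pick_remove[OF finI, of a i] pick_remove[OF finJ, of c j] a c i' j' cI cJ by simp
    also have "\<dots> = submatrix G (I - {pick I a}) (J - {pick J c}) $$ (i, j)"
      using i j by (intro submatrix_index[symmetric]) (auto simp: dim_submatrix)
    finally show "mat_delete (submatrix G I J) a c $$ (i, j) = submatrix G (I - {pick I a}) (J - {pick J c}) $$ (i, j)" .
  qed
qed

definition hyb :: "nat \<Rightarrow> 'b mat \<Rightarrow> 'b mat \<Rightarrow> nat \<Rightarrow> 'b mat" where
  "hyb m G0 G1 k = mat m m (\<lambda>(i,l). if l < k then G1 $$ (i,l) else G0 $$ (i,l))"

lemma absL_neg1_pow: "absL ((-1::'a::{field,finite} fls) ^ n) = 1"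
  by (cases "even n") (auto simp: absL_uminus)

lemma sub_dims:
  assumes "G \<in> carrier_mat m m" "I \<subseteq> {..<m}" "J \<subseteq> {..<m}" "card I = d" "card J = d"
  shows "submatrix G I J \<in> carrier_mat d d"
proof -
  have "{i. i < m \<and> i \<in> I} = I" "{i. i < m \<and> i \<in> J} = J" using assms by auto
  thus ?thesis using assms unfolding carrier_mat_def by (simp add: dim_submatrix)
qed

lemma sub_index:
  assumes "G \<in> carrier_mat m m" "I \<subseteq> {..<m}" "J \<subseteq> {..<m}" "card I = d" "card J = d" "i < d" "j < d"
  shows "submatrix G I J $$ (i,j) = G $$ (pick I i, pick J j)"
proof -
  have "{i. i < m \<and> i \<in> I} = I" "{i. i < m \<and> i \<in> J} = J" using assms by auto
  thus ?thesis using assms by (intro submatrix_index) auto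
qed

lemma pick_lt: "I \<subseteq> {..<m} \<Longrightarrow> card I = d \<Longrightarrow> i < d \<Longrightarrow> pick I i < m"
  using pick_in_set[of i I] by auto

lemma one_step:
  fixes G0 G1 :: "'a::{field,finite} fls mat"
  assumes G0: "G0 \<in> carrier_mat m m" and G1: "G1 \<in> carrier_mat m m"
    and delta: "\<And>i l. i < m \<Longrightarrow> l < m \<Longrightarrow> absL (G1 $$ (i,l) - G0 $$ (i,l)) \<le> \<delta>"
    and dS: "\<delta> \<ge> 0" "S \<ge> 0"
    and minors: "\<And>I' J'. I' \<subseteq> {..<m} \<Longrightarrow> J' \<subseteq> {..<m} \<Longrightarrow> card I' = d - 1 \<Longrightarrow> card J' = d - 1
        \<Longrightarrow> absL (det (submatrix (hyb m G0 G1 k) I' J')) \<le> S"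
    and I: "I \<subseteq> {..<m}" and J: "J \<subseteq> {..<m}" and cI: "card I = d" and cJ: "card J = d"
    and k: "k < m"
  shows "absL (det (submatrix (hyb m G0 G1 (Suc k)) I J) - det (submatrix (hyb m G0 G1 k) I J)) \<le> \<delta> * S"
proof -
  let ?H1 = "hyb m G0 G1 (Suc k)" and ?H0 = "hyb m G0 G1 k"
  define P1 where "P1 = submatrix ?H1 I J"
  define P0 where "P0 = submatrix ?H0 I J"
  have H1: "?H1 \<in> carrier_mat m m" and H0: "?H0 \<in> carrier_mat m m" unfolding hyb_def by auto
  have P1: "P1 \<in> carrier_mat d d" unfolding P1_def by (rule sub_dims[OF H1 I J cI cJ])
  have P0: "P0 \<in> carrier_mat d d" unfolding P0_def by (rule sub_dims[OF H0 I J cI cJ])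
  have P1i: "P1 $$ (i,j) = (if pick J j < Suc k then G1 else G0) $$ (pick I i, pick J j)" if "i < d" "j < d" for i j
    unfolding P1_def using sub_index[OF H1 I J cI cJ that] pick_lt[OF I cI that(1)] pick_lt[OF J cJ that(2)]
    by (simp add: hyb_def)
  have P0i: "P0 $$ (i,j) = (if pick J j < k then G1 else G0) $$ (pick I i, pick J j)" if "i < d" "j < d" for i j
    unfolding P0_def using sub_index[OF H0 I J cI cJ that] pick_lt[OF I cI that(1)] pick_lt[OF J cJ that(2)]
    by (simp add: hyb_def)
  have finJ: "finite J" using J finite_subset by auto
  show ?thesis
  proof (cases "k \<in> J")
    case False
    have "P1 = P0"
    proof (rule eq_matI)
      fix i j assume "i < dim_row P0" "j < dim_col P0"
      hence ij: "i < d" "j < d" using P0 by auto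
      have "pick J j \<in> J" using pick_in_set[of j J] ij cJ by auto
      hence "pick J j \<noteq> k" using False by auto
      thus "P1 $$ (i,j) = P0 $$ (i,j)" using P1i[OF ij] P0i[OF ij] by auto
    qed (use P0 P1 in auto)
    thus ?thesis unfolding P1_def P0_def using dS by simp
  next
    case True
    define c where "c = card {a\<in>J. a < k}"
    have pc: "pick J c = k" unfolding c_def using True by (rule pick_card_in_set)
    have "{a\<in>J. a < k} \<subset> J" using True by auto
    hence c: "c < d" unfolding c_def using psubset_card_mono[OF finJ] cJ by auto
    have same: "P1 $$ (i,j) = P0 $$ (i,j)" if "i < d" "j < d" "j \<noteq> c" for i j
    proof -
      have "pick J j \<noteq> pick J c" using that c cJ pick_mono[of j J c] pick_mono[of c J j]
        by (cases "j < c") auto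
      thus ?thesis using P1i[OF that(1,2)] P0i[OF that(1,2)] pc by auto
    qed
    have md: "mat_delete P1 i c = mat_delete P0 i c" if "i < d" for i
    proof (rule eq_matI)
      fix i' j' assume "i' < dim_row (mat_delete P0 i c)" "j' < dim_col (mat_delete P0 i c)"
      hence ij: "i' < d - 1" "j' < d - 1" using P0 by auto
      show "mat_delete P1 i c $$ (i', j') = mat_delete P0 i c $$ (i', j')"
        unfolding mat_delete_def using ij P0 P1 by (auto intro!: same)
    qed (use P0 P1 in auto)
    have "det P1 = (\<Sum>i<d. P1 $$ (i,c) * cofactor P1 i c)" by (rule laplace_expansion_column[OF P1 c])
    moreover have "det P0 = (\<Sum>i<d. P0 $$ (i,c) * cofactor P0 i c)" by (rule laplace_expansion_column[OF P0 c])
    ultimately have "det P1 - det P0 = (\<Sum>i<d. (P1 $$ (i,c) - P0 $$ (i,c)) * cofactor P0 i c)"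
      using md by (simp add: cofactor_def sum_subtractf[symmetric] algebra_simps)
    also have "absL \<dots> \<le> \<delta> * S"
    proof (rule absL_sum_le)
      fix i assume "i \<in> {..<d}"
      hence i: "i < d" by auto
      have "absL (P1 $$ (i,c) - P0 $$ (i,c)) = absL (G1 $$ (pick I i, k) - G0 $$ (pick I i, k))"
        using P1i[OF i c] P0i[OF i c] pc by simp
      also have "\<dots> \<le> \<delta>" using delta pick_lt[OF I cI i] k by auto
      finally have e1: "absL (P1 $$ (i,c) - P0 $$ (i,c)) \<le> \<delta>" .
      have "mat_delete P0 i c = submatrix ?H0 (I - {pick I i}) (J - {pick J c})"
        unfolding P0_def by (rule mat_delete_submatrix[OF H0 I J cI cJ i c])
      moreover have "absL (det (submatrix ?H0 (I - {pick I i}) (J - {pick J c}))) \<le> S"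
      proof (rule minors)
        have "pick I i \<in> I" using pick_in_set[of i I] i cI by auto
        thus "card (I - {pick I i}) = d - 1" using cI I finite_subset by (simp add: card_Diff_singleton)
        have "pick J c \<in> J" using pick_in_set[of c J] c cJ by auto
        thus "card (J - {pick J c}) = d - 1" using cJ finJ by (simp add: card_Diff_singleton)
      qed (use I J in auto)
      ultimately have e2: "absL (cofactor P0 i c) \<le> S"
        unfolding cofactor_def by (simp add: absL_mult absL_neg1_pow)
      show "absL ((P1 $$ (i,c) - P0 $$ (i,c)) * cofactor P0 i c) \<le> \<delta> * S"
        unfolding absL_mult using e1 e2 by (intro mult_mono) (auto simp: absL_nonneg dS)
    qed (use dS in simp)
    finally show ?thesis unfolding P1_def P0_def .
  qed
qed

lemma telescope:
  fixes G0 G1 :: "'a::{field,finite} fls mat"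
  assumes G0: "G0 \<in> carrier_mat m m" and G1: "G1 \<in> carrier_mat m m"
    and delta: "\<And>i l. i < m \<Longrightarrow> l < m \<Longrightarrow> absL (G1 $$ (i,l) - G0 $$ (i,l)) \<le> \<delta>"
    and dS: "\<delta> \<ge> 0" "S \<ge> 0"
    and minors: "\<And>k I' J'. k \<le> m \<Longrightarrow> I' \<subseteq> {..<m} \<Longrightarrow> J' \<subseteq> {..<m} \<Longrightarrow> card I' = d - 1 \<Longrightarrow> card J' = d - 1
        \<Longrightarrow> absL (det (submatrix (hyb m G0 G1 k) I' J')) \<le> S"
    and I: "I \<subseteq> {..<m}" and J: "J \<subseteq> {..<m}" and cI: "card I = d" and cJ: "card J = d"
  shows "absL (det (submatrix G1 I J) - det (submatrix G0 I J)) \<le> \<delta> * S"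
proof -
  have h0: "hyb m G0 G1 0 = G0" using G0 by (intro eq_matI) (auto simp: hyb_def)
  have hm: "hyb m G0 G1 m = G1" using G1 by (intro eq_matI) (auto simp: hyb_def)
  have "k \<le> m \<Longrightarrow> absL (det (submatrix (hyb m G0 G1 k) I J) - det (submatrix G0 I J)) \<le> \<delta> * S" for k
  proof (induction k)
    case 0 thus ?case using h0 dS by simp
  next
    case (Suc k)
    have "absL (det (submatrix (hyb m G0 G1 (Suc k)) I J) - det (submatrix G0 I J))
       = absL ((det (submatrix (hyb m G0 G1 (Suc k)) I J) - det (submatrix (hyb m G0 G1 k) I J))
           + (det (submatrix (hyb m G0 G1 k) I J) - det (submatrix G0 I J)))" by simp
    also have "\<dots> \<le> max (absL (det (submatrix (hyb m G0 G1 (Suc k)) I J) - det (submatrix (hyb m G0 G1 k) I J)))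
           (absL (det (submatrix (hyb m G0 G1 k) I J) - det (submatrix G0 I J)))" by (rule absL_add)
    also have "\<dots> \<le> \<delta> * S"
    proof (rule max.boundedI)
      show "absL (det (submatrix (hyb m G0 G1 (Suc k)) I J) - det (submatrix (hyb m G0 G1 k) I J)) \<le> \<delta> * S"
        using Suc.prems by (intro one_step[OF G0 G1 delta dS _ I J cI cJ]) (auto intro: minors)
    qed (use Suc in auto)
    finally show ?case .
  qed
  from this[of m] show ?thesis using hm by simp
qed

definition gform :: "(nat \<Rightarrow> 'a::field fls vec) \<Rightarrow> nat \<Rightarrow> nat \<Rightarrow> 'a fls mat \<Rightarrow> nat \<Rightarrow> nat \<Rightarrow> 'a fls" where
  "gform y m n X i l = (\<Sum>r<n+m. vec_index (y i) r * (if r < n then X $$ (l,r) else (if r - n = l then 1 else 0)))"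

lemma G_entry:
  assumes "X \<in> carrier_mat m n" "i < m" "l < m"
  shows "Gmat y m n X $$ (i,l) = gform y m n X i l"
proof -
  have c: "col (tildeAstar m n X) l $ r = (if r < n then X $$ (l,r) else (if r - n = l then 1 else 0))"
    if "r < n + m" for r
    using assms that unfolding tildeAstar_def by (simp add: col_def)
  have d: "dim_vec (col (tildeAstar m n X) l) = n + m" using assms unfolding tildeAstar_def by simp
  have dr: "dim_row (tildeAstar m n X) = n + m" using assms unfolding tildeAstar_def by simp
  have "Gmat y m n X $$ (i,l) = (\<Sum>r<n+m. vec_index (y i) r * vec_index (col (tildeAstar m n X) l) r)"
    using assms unfolding Gmat_def scalar_prod_def d by (simp add: atLeast0LessThan dr)
  also have "\<dots> = gform y m n X i l" unfolding gform_def by (intro sum.cong) (auto simp: c)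
  finally show ?thesis .
qed

lemma Gmat_carrier: "Gmat y m n X \<in> carrier_mat m m" unfolding Gmat_def by simp

lemma y_entry_le1:
  assumes orth: "orthonormalL m n y" and i: "i < m" and r: "r < m + n"
  shows "absL (vec_index (y i) r) \<le> 1"
proof -
  define t where "t = (\<lambda>i'. if i' = i then (1::'a fls) else 0)"
  have yc: "y i \<in> carrier_vec (m+n)" using orth i unfolding orthonormalL_def by auto
  have "vec (m + n) (\<lambda>k. \<Sum>i'<m. t i' * (vec_index (y i') k)) = y i"
  proof (intro eq_vecI)
    fix k assume k: "k < dim_vec (y i)"
    have "(\<Sum>i'<m. t i' * (vec_index (y i') k)) = (\<Sum>i'<m. if i' = i then vec_index (y i) k else 0)"
      by (intro sum.cong) (auto simp: t_def)
    also have "\<dots> = vec_index (y i) k" using i by simp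
    finally show "vec_index (vec (m + n) (\<lambda>k. \<Sum>i'<m. t i' * (vec_index (y i') k))) k = vec_index (y i) k"
      using k yc by simp
  qed (use yc in simp)
  hence eq: "vnormL (y i) = Max (insert 0 {absL (t i') | i'. i' < m})"
    using orth unfolding orthonormalL_def by metis
  have "{absL (t i') | i'. i' < m} \<subseteq> {0, 1}" unfolding t_def by auto
  hence fin: "finite {absL (t i') | i'. i' < m}" by (rule finite_subset) auto
  have "Max (insert 0 {absL (t i') | i'. i' < m}) \<le> 1"
    using fin \<open>{absL (t i') | i'. i' < m} \<subseteq> {0, 1}\<close> by (subst Max_le_iff) auto
  moreover have "absL (vec_index (y i) r) \<le> vnormL (y i)"
  proof -
    have "{absL (vec_index (y i) j) | j. j < dim_vec (y i)} = (\<lambda>j. absL (vec_index (y i) j)) ` {..<dim_vec (y i)}" by auto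
    hence "finite {absL (vec_index (y i) j) | j. j < dim_vec (y i)}" by simp
    thus ?thesis unfolding vnormL_def using yc r by (intro Max_ge) auto
  qed
  ultimately show ?thesis using eq by linarith
qed

lemma G_entry_bound:
  assumes orth: "orthonormalL m n y" and X: "X \<in> carrier_mat m n" and i: "i < m" and l: "l < m"
    and K: "K \<ge> 1" and b: "\<And>l r. l < m \<Longrightarrow> r < n \<Longrightarrow> absL (X $$ (l,r)) \<le> K"
  shows "absL (Gmat y m n X $$ (i,l)) \<le> K"
  unfolding G_entry[OF X i l] gform_def
proof (rule absL_sum_le)
  fix r assume r: "r \<in> {..<n+m}"
  have "absL (vec_index (y i) r) \<le> 1" using y_entry_le1[OF orth i] r by auto
  moreover have "absL (if r < n then X $$ (l,r) else (if r - n = l then 1 else 0)) \<le> K"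
    using b[OF l] K by auto
  ultimately show "absL (vec_index (y i) r * (if r < n then X $$ (l,r) else (if r - n = l then 1 else 0))) \<le> K"
    unfolding absL_mult using mult_mono[of _ 1 _ K] absL_nonneg by fastforce
qed (use K in auto)

lemma G_diff_bound:
  assumes orth: "orthonormalL m n y" and X: "X \<in> carrier_mat m n" and X': "X' \<in> carrier_mat m n"
    and i: "i < m" and l: "l < m"
  shows "absL (Gmat y m n X' $$ (i,l) - Gmat y m n X $$ (i,l)) \<le> mnormL (X' - X)"
proof -
  have "Gmat y m n X' $$ (i,l) - Gmat y m n X $$ (i,l)
     = (\<Sum>r<n+m. vec_index (y i) r * (if r < n then (X' - X) $$ (l,r) else 0))"
    unfolding G_entry[OF X i l] G_entry[OF X' i l] gform_def sum_subtractf[symmetric]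
    using X X' l by (intro sum.cong) (auto simp: algebra_simps)
  also have "absL \<dots> \<le> mnormL (X' - X)"
  proof (rule absL_sum_le)
    fix r assume r: "r \<in> {..<n+m}"
    have "absL (vec_index (y i) r) \<le> 1" using y_entry_le1[OF orth i] r by auto
    moreover have "absL (if r < n then (X' - X) $$ (l,r) else 0) \<le> mnormL (X' - X)"
      using mnormL_entry[of l "X' - X" r] X X' l by (auto simp: mnormL_nonneg)
    ultimately show "absL (vec_index (y i) r * (if r < n then (X' - X) $$ (l,r) else 0)) \<le> mnormL (X' - X)"
      unfolding absL_mult using mult_mono[of _ 1 _ "mnormL (X' - X)"] absL_nonneg by fastforce
  qed (rule mnormL_nonneg)
  finally show ?thesis .
qed

definition hybX :: "nat \<Rightarrow> nat \<Rightarrow> 'b mat \<Rightarrow> 'b mat \<Rightarrow> nat \<Rightarrow> 'b mat" where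
  "hybX m n X X' k = mat m n (\<lambda>(l,r). if l < k then X' $$ (l,r) else X $$ (l,r))"

lemma hyb_G:
  assumes X: "X \<in> carrier_mat m n" and X': "X' \<in> carrier_mat m n"
  shows "hyb m (Gmat y m n X) (Gmat y m n X') k = Gmat y m n (hybX m n X X' k)"
proof (rule eq_matI)
  fix i l assume "i < dim_row (Gmat y m n (hybX m n X X' k))" "l < dim_col (Gmat y m n (hybX m n X X' k))"
  hence il: "i < m" "l < m" unfolding Gmat_def by auto
  have H: "hybX m n X X' k \<in> carrier_mat m n" unfolding hybX_def by simp
  show "hyb m (Gmat y m n X) (Gmat y m n X') k $$ (i, l) = Gmat y m n (hybX m n X X' k) $$ (i, l)"
    using il by (auto simp: hyb_def G_entry[OF H il, unfolded hybX_def] G_entry[OF X il] G_entry[OF X' il] gform_def hybX_def intro!: sum.cong)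
qed (auto simp: hyb_def Gmat_def)

definition minset :: "(nat \<Rightarrow> 'a::{field,finite} fls vec) \<Rightarrow> nat \<Rightarrow> nat \<Rightarrow> nat \<Rightarrow> 'a fls mat \<Rightarrow> real set" where
  "minset y m n j X = {absL (det (submatrix (Gmat y m n X) I J)) | I J.
            I \<subseteq> {..<m} \<and> J \<subseteq> {..<m} \<and> card I = j \<and> card J = j}"

lemma MnormL_pos: "j \<ge> 1 \<Longrightarrow> MnormL y m n (int j) X = Max (minset y m n j X)"
  unfolding MnormL_def minset_def by simp

lemma minset_fin: "finite (minset y m n j X)"
proof -
  have "minset y m n j X \<subseteq> (\<lambda>(I,J). absL (det (submatrix (Gmat y m n X) I J))) ` (Pow {..<m} \<times> Pow {..<m})"
    unfolding minset_def by auto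
  thus ?thesis by (rule finite_subset) simp
qed

lemma minset_ne: "j \<le> m \<Longrightarrow> minset y m n j X \<noteq> {}"
proof -
  assume "j \<le> m"
  hence "absL (det (submatrix (Gmat y m n X) {..<j} {..<j})) \<in> minset y m n j X"
    unfolding minset_def by (auto intro!: exI[of _ "{..<j}"])
  thus ?thesis by auto
qed

lemma det_empty_sub:
  assumes "card I = 0" "card J = 0" "I \<subseteq> {..<m}" "J \<subseteq> {..<m}" "G \<in> carrier_mat m m"
  shows "det (submatrix G I J) = 1"
proof -
  have "submatrix G I J \<in> carrier_mat 0 0" using sub_dims[OF assms(5,3,4)] assms by auto
  hence "submatrix G I J = 1\<^sub>m 0" by (intro eq_matI) auto
  thus ?thesis by simp
qed

lemma M_ge:
  assumes "I \<subseteq> {..<m}" "J \<subseteq> {..<m}" "card I = j" "card J = j"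
  shows "absL (det (submatrix (Gmat y m n X) I J)) \<le> MnormL y m n (int j) X"
proof (cases "j = 0")
  case True
  thus ?thesis using det_empty_sub[OF _ _ assms(1,2) Gmat_carrier, of y n X] assms unfolding MnormL_def by simp
next
  case False
  have "MnormL y m n (int j) X = Max (minset y m n j X)" using False by (intro MnormL_pos) auto
  moreover have "absL (det (submatrix (Gmat y m n X) I J)) \<in> minset y m n j X"
    using assms unfolding minset_def by auto
  ultimately show ?thesis by (simp add: minset_fin)
qed

lemma M_attain:
  assumes "1 \<le> j" "j \<le> m"
  shows "\<exists>I J. I \<subseteq> {..<m} \<and> J \<subseteq> {..<m} \<and> card I = j \<and> card J = j \<and>
      MnormL y m n (int j) X = absL (det (submatrix (Gmat y m n X) I J))"
proof -
  have "Max (minset y m n j X) \<in> minset y m n j X" using minset_ne[OF assms(2), of y n X] by (intro Max_in) (auto simp: minset_fin)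
  thus ?thesis unfolding MnormL_pos[OF assms(1)] by (auto simp: minset_def)
qed

lemma M_nonneg: "j \<le> m \<Longrightarrow> MnormL y m n (int j) X \<ge> 0"
proof (cases "j = 0")
  case False
  assume "j \<le> m"
  then obtain I J where "I \<subseteq> {..<m}" "J \<subseteq> {..<m}" "card I = j" "card J = j"
    using M_attain[of j m y n X] False \<open>j \<le> m\<close> by force
  thus ?thesis using M_ge[of I m J j y n X] absL_nonneg by (meson order_trans)
qed (simp add: MnormL_def)

lemma M_bound:
  assumes jm: "j \<le> m" and K: "K \<ge> 1" and b: "\<And>i l. i < m \<Longrightarrow> l < m \<Longrightarrow> absL (Gmat y m n X $$ (i,l)) \<le> K"
  shows "MnormL y m n (int j) X \<le> K ^ j"
proof (cases "j = 0")
  case False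
  obtain I J where IJ: "I \<subseteq> {..<m}" "J \<subseteq> {..<m}" "card I = j" "card J = j"
     and eq: "MnormL y m n (int j) X = absL (det (submatrix (Gmat y m n X) I J))"
    using M_attain[of j m y n X] False jm by force
  have "absL (det (submatrix (Gmat y m n X) I J)) \<le> K ^ j"
  proof (rule det_bound)
    show "submatrix (Gmat y m n X) I J \<in> carrier_mat j j" by (rule sub_dims[OF Gmat_carrier IJ])
    fix i l assume il: "i < j" "l < j"
    thus "absL (submatrix (Gmat y m n X) I J $$ (i, l)) \<le> K"
      using sub_index[OF Gmat_carrier[of y m n X] IJ il] pick_lt[OF IJ(1,3) il(1)] pick_lt[OF IJ(2,4) il(2)] by (simp add: b)
  qed (use K in simp)
  thus ?thesis using eq by simp
qed (simp add: MnormL_def)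

lemma radL_pos: "radL TYPE('a::{field,finite}) z > 0"
  unfolding radL_def using cardU_ge2[where 'a='a] by simp

lemma rad_mono:
  fixes C C'' :: "'a::{field,finite} fls mat"
  assumes mn: "m > 0" "n > 0" and C: "C \<in> carrier_mat m n" and C'': "C'' \<in> carrier_mat m n"
    and sub: "ballL m n C'' z'' \<subseteq> ballL m n C z"
  shows "radL TYPE('a) z'' \<le> radL TYPE('a) z"
proof -
  define e :: "'a fls" where "e = fls_shift z'' 1"
  have ae: "absL e = radL TYPE('a) z''"
    unfolding e_def absL_def radL_def by (simp add: fls_shift_eq0_iff)
  define D where "D = mat m n (\<lambda>(l,r). if l = 0 \<and> r = 0 then e else 0)"
  define E where "E = C'' + D"
  have D: "D \<in> carrier_mat m n" unfolding D_def by simp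
  have "E - C'' = D" unfolding E_def using C'' D by (intro eq_matI) auto
  moreover have "mnormL D \<le> radL TYPE('a) z''"
    using D radL_pos[where 'a='a and z=z''] ae by (intro mnormL_le) (auto simp: D_def less_imp_le)
  ultimately have "E \<in> ballL m n C'' z''" unfolding ballL_def E_def using C'' D by auto
  hence "E \<in> ballL m n C z" using sub by auto
  hence n1: "mnormL (E - C) \<le> radL TYPE('a) z" unfolding ballL_def by auto
  have "mnormL (C'' - C'') \<le> radL TYPE('a) z''"
    using C'' radL_pos[where 'a='a and z=z''] by (intro mnormL_le) auto
  hence "C'' \<in> ballL m n C'' z''" unfolding ballL_def using C'' by auto
  hence "C'' \<in> ballL m n C z" using sub by auto
  hence n2: "mnormL (C'' - C) \<le> radL TYPE('a) z" unfolding ballL_def by auto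
  have "e = (E - C) $$ (0,0) - (C'' - C) $$ (0,0)" unfolding E_def D_def using C C'' mn by simp
  hence "absL e \<le> max (absL ((E - C) $$ (0,0))) (absL ((C'' - C) $$ (0,0)))" using absL_diff by metis
  also have "\<dots> \<le> radL TYPE('a) z"
    using mnormL_entry[of 0 "E - C" 0] mnormL_entry[of 0 "C'' - C" 0] n1 n2 C C'' mn
    unfolding E_def D_def by auto
  finally show ?thesis using ae by simp
qed

theorem corollary3p4:
  fixes y :: "nat \<Rightarrow> 'a::{field,finite} fls vec"
    and m n v :: nat
    and C C'' C' :: "'a fls mat"
    and z z'' z' :: int
    and \<mu> :: real
  assumes orth: "orthonormalL m n y"
    and v: "1 \<le> v" "v \<le> m"
    and cents: "C \<in> carrier_mat m n" "C'' \<in> carrier_mat m n" "C' \<in> carrier_mat m n"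
    and sub1: "ballL m n C'' z'' \<subseteq> ballL m n C z"
    and mu: "\<mu> > 0"
    and hyp: "\<forall>A\<in>ballL m n C'' z''.
               MnormL y m n (int v - 1) A
                 > radL TYPE('a) z * \<mu> * MsetL y m n (int v - 2) (ballL m n C'' z'')"
    and sub2: "ballL m n C' z' \<subseteq> ballL m n C'' z''"
    and rad: "radL TYPE('a) z' < 1/2 * \<mu> * radL TYPE('a) z''"
  shows "\<forall>A'\<in>ballL m n C' z'.
           MnormL y m n (int v - 1) A' > 1/2 * MsetL y m n (int v - 1) (ballL m n C' z')"
proof (intro ballI)
  fix A' assume A': "A' \<in> ballL m n C' z'"
  let ?B'' = "ballL m n C'' z''" and ?B' = "ballL m n C' z'"
  have Bne: "?B' \<noteq> {}" using A' by auto
  show "MnormL y m n (int v - 1) A' > 1/2 * MsetL y m n (int v - 1) ?B'"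
  proof (cases "v = 1")
    case True
    hence "MsetL y m n (int v - 1) ?B' = 1" unfolding MsetL_def MnormL_def using Bne by simp
    moreover have "MnormL y m n (int v - 1) A' = 1" unfolding MnormL_def using True by simp
    ultimately show ?thesis by simp
  next
    case False
    define j where "j = v - 1"
    have j1: "1 \<le> j" "j \<le> m" using v False unfolding j_def by auto
    have ej: "int v - 1 = int j" "int v - 2 = int (j - 1)" using v False unfolding j_def by auto
    define S where "S = MsetL y m n (int (j-1)) ?B''"
    define \<rho> where "\<rho> = radL TYPE('a) z"
    define \<rho>'' where "\<rho>'' = radL TYPE('a) z''"
    define \<rho>' where "\<rho>' = radL TYPE('a) z'"
    have \<rho>pos: "\<rho> > 0" "\<rho>'' > 0" "\<rho>' > 0" unfolding \<rho>_def \<rho>''_def \<rho>'_def by (auto intro: radL_pos)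
    have car: "X \<in> carrier_mat m n" if "X \<in> ballL m n D w" for X D w using that unfolding ballL_def by auto
    have inB'': "X \<in> ?B''" if "X \<in> ?B'" for X using that sub2 by auto
    define K where "K = max 1 (max \<rho>'' (mnormL C''))"
    have K1: "K \<ge> 1" unfolding K_def by auto
    have entK: "absL (X $$ (l,r)) \<le> K" if X: "X \<in> ?B''" and lr: "l < m" "r < n" for X l r
    proof -
      have Xc: "X \<in> carrier_mat m n" using car[OF X] .
      have "X $$ (l,r) = (X - C'') $$ (l,r) + C'' $$ (l,r)" using Xc cents lr by simp
      hence "absL (X $$ (l,r)) \<le> max (absL ((X - C'') $$ (l,r))) (absL (C'' $$ (l,r)))"
        by (metis absL_add)
      moreover have "absL ((X - C'') $$ (l,r)) \<le> \<rho>''"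
        using mnormL_entry[of l "X - C''" r] Xc cents lr X unfolding ballL_def \<rho>''_def by auto
      moreover have "absL (C'' $$ (l,r)) \<le> mnormL C''" using mnormL_entry[of l C'' r] cents lr by auto
      ultimately show ?thesis unfolding K_def by auto
    qed
    have Sb: "MnormL y m n (int (j-1)) X \<le> S" if X: "X \<in> ?B''" for X
      unfolding S_def MsetL_def
    proof (rule cSUP_upper[OF X])
      show "bdd_above ((\<lambda>X. MnormL y m n (int (j-1)) X) ` ?B'')"
      proof (rule bdd_aboveI2)
        fix X assume X: "X \<in> ?B''"
        show "MnormL y m n (int (j-1)) X \<le> K ^ (j-1)"
          using j1 K1 by (intro M_bound G_entry_bound[OF orth car[OF X]] entK[OF X]) auto
      qed
    qed
    have C''in: "C'' \<in> ?B''"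
    proof -
      have "mnormL (C'' - C'') \<le> \<rho>''" using cents \<rho>pos by (intro mnormL_le) auto
      thus ?thesis unfolding ballL_def \<rho>''_def using cents by auto
    qed
    have S0: "S \<ge> 0" using Sb[OF C''in] M_nonneg[of "j-1" m y n C''] j1 by linarith
    have hybin: "hybX m n X X' k \<in> ?B''" if X: "X \<in> ?B''" and X': "X' \<in> ?B''" for X X' k
    proof -
      have Xc: "X \<in> carrier_mat m n" and X'c: "X' \<in> carrier_mat m n" using car X X' by auto
      have "mnormL (hybX m n X X' k - C'') \<le> \<rho>''"
      proof (rule mnormL_le)
        fix l r assume "l < dim_row (hybX m n X X' k - C'')" "r < dim_col (hybX m n X X' k - C'')"
        hence lr: "l < m" "r < n" using cents(2) by (auto simp: hybX_def)
        have a: "absL ((X - C'') $$ (l,r)) \<le> \<rho>''"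
          using mnormL_entry[of l "X - C''" r] Xc cents lr X unfolding ballL_def \<rho>''_def by auto
        have b: "absL ((X' - C'') $$ (l,r)) \<le> \<rho>''"
          using mnormL_entry[of l "X' - C''" r] X'c cents lr X' unfolding ballL_def \<rho>''_def by auto
        show "absL ((hybX m n X X' k - C'') $$ (l, r)) \<le> \<rho>''"
          using a b lr Xc X'c cents(2) by (auto simp: hybX_def)
      qed (use \<rho>pos in auto)
      thus ?thesis unfolding ballL_def \<rho>''_def by (auto simp: hybX_def)
    qed
    have minors: "absL (det (submatrix (hyb m (Gmat y m n X) (Gmat y m n X') k) I' J')) \<le> S"
      if X: "X \<in> ?B''" and X': "X' \<in> ?B''" and IJ: "I' \<subseteq> {..<m}" "J' \<subseteq> {..<m}" "card I' = j - 1" "card J' = j - 1"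
      for X X' k I' J'
    proof -
      have "absL (det (submatrix (hyb m (Gmat y m n X) (Gmat y m n X') k) I' J'))
          = absL (det (submatrix (Gmat y m n (hybX m n X X' k)) I' J'))"
        using hyb_G[OF car[OF X] car[OF X']] by simp
      also have "\<dots> \<le> MnormL y m n (int (j-1)) (hybX m n X X' k)" by (rule M_ge[OF IJ])
      also have "\<dots> \<le> S" by (rule Sb[OF hybin[OF X X']])
      finally show ?thesis .
    qed
    have diff: "absL (det (submatrix (Gmat y m n A2) I J) - det (submatrix (Gmat y m n A) I J)) \<le> mnormL (A2 - A) * S"
      if A: "A \<in> ?B'" and A2: "A2 \<in> ?B'" and IJ: "I \<subseteq> {..<m}" "J \<subseteq> {..<m}" "card I = j" "card J = j"
      for A A2 I J
    proof (rule telescope[OF Gmat_carrier Gmat_carrier _ mnormL_nonneg S0 _ IJ])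
      show "absL (Gmat y m n A2 $$ (i, l) - Gmat y m n A $$ (i, l)) \<le> mnormL (A2 - A)" if "i < m" "l < m" for i l
        by (rule G_diff_bound[OF orth car[OF A] car[OF A2] that])
      show "absL (det (submatrix (hyb m (Gmat y m n A) (Gmat y m n A2) k) I' J')) \<le> S"
        if "k \<le> m" "I' \<subseteq> {..<m}" "J' \<subseteq> {..<m}" "card I' = j - 1" "card J' = j - 1" for k I' J'
        using minors[OF inB''[OF A] inB''[OF A2] that(2-5)] .
    qed
    have dS: "mnormL (A2 - A) * S \<le> 1/2 * \<mu> * \<rho> * S" if A: "A \<in> ?B'" and A2: "A2 \<in> ?B'" for A A2
    proof (cases "n = 0")
      case True
      have "mnormL (A2 - A) \<le> 0" using car[OF A] car[OF A2] True by (intro mnormL_le) auto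
      hence "mnormL (A2 - A) = 0" using mnormL_nonneg[of "A2 - A"] by linarith
      thus ?thesis using S0 mu \<rho>pos by simp
    next
      case False
      have "mnormL (A2 - A) \<le> \<rho>'"
      proof (rule mnormL_le)
        fix l r assume "l < dim_row (A2 - A)" "r < dim_col (A2 - A)"
        hence lr: "l < m" "r < n" using car[OF A2] car[OF A] by auto
        have "(A2 - A) $$ (l,r) = (A2 - C') $$ (l,r) - (A - C') $$ (l,r)"
          using car[OF A2] car[OF A] cents lr by simp
        hence "absL ((A2 - A) $$ (l,r)) \<le> max (absL ((A2 - C') $$ (l,r))) (absL ((A - C') $$ (l,r)))"
          by (metis absL_diff)
        moreover have "absL ((A2 - C') $$ (l,r)) \<le> \<rho>'"
          using mnormL_entry[of l "A2 - C'" r] car[OF A2] cents lr A2 unfolding ballL_def \<rho>'_def by auto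
        moreover have "absL ((A - C') $$ (l,r)) \<le> \<rho>'"
          using mnormL_entry[of l "A - C'" r] car[OF A] cents lr A unfolding ballL_def \<rho>'_def by auto
        ultimately show "absL ((A2 - A) $$ (l,r)) \<le> \<rho>'" by auto
      qed (use \<rho>pos in auto)
      moreover have "\<rho>'' \<le> \<rho>" unfolding \<rho>''_def \<rho>_def
        using rad_mono[OF _ _ cents(1,2) sub1] False j1 by auto
      ultimately have "mnormL (A2 - A) \<le> 1/2 * \<mu> * \<rho>"
        using rad mu unfolding \<rho>'_def[symmetric] \<rho>''_def[symmetric]
      proof -
        assume h: "mnormL (A2 - A) \<le> \<rho>'" "\<rho>'' \<le> \<rho>" "\<rho>' < 1 / 2 * \<mu> * \<rho>''" "0 < \<mu>"
        have "1/2 * \<mu> * \<rho>'' \<le> 1/2 * \<mu> * \<rho>" using h by (intro mult_left_mono) auto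
        thus ?thesis using h by linarith
      qed
      thus ?thesis using S0 by (intro mult_right_mono) auto
    qed
    have pos: "MnormL y m n (int j) A > \<rho> * \<mu> * S" if A: "A \<in> ?B''" for A
      using hyp A ej unfolding S_def \<rho>_def by auto
    have key: "MnormL y m n (int j) A \<le> MnormL y m n (int j) A'" if A: "A \<in> ?B'" for A
    proof -
      obtain I J where IJ: "I \<subseteq> {..<m}" "J \<subseteq> {..<m}" "card I = j" "card J = j"
        and eq: "MnormL y m n (int j) A = absL (det (submatrix (Gmat y m n A) I J))"
        using M_attain[OF j1, of y n A] by blast
      define x where "x = det (submatrix (Gmat y m n A) I J)"
      define x' where "x' = det (submatrix (Gmat y m n A') I J)"
      have "absL (x - x') \<le> mnormL (A - A') * S" unfolding x_def x'_def by (rule diff[OF A' A IJ])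
      also have "\<dots> \<le> 1/2 * \<mu> * \<rho> * S" by (rule dS[OF A' A])
      also have "\<dots> < 1/2 * absL x" using pos[OF inB''[OF A]] eq unfolding x_def by (simp add: mult.commute)
      finally have lt: "absL (x - x') < 1/2 * absL x" .
      have "absL x \<le> max (absL x') (absL (x - x'))" using absL_add[of x' "x - x'"] by simp
      hence "absL x \<le> absL x'" using lt absL_nonneg[of x] by auto
      also have "\<dots> \<le> MnormL y m n (int j) A'" unfolding x'_def by (rule M_ge[OF IJ])
      finally show ?thesis using eq unfolding x_def by simp
    qed
    have "MsetL y m n (int j) ?B' \<le> MnormL y m n (int j) A'"
      unfolding MsetL_def using Bne key by (intro cSUP_least) auto
    moreover have "MnormL y m n (int j) A' > 0"
      using pos[OF inB''[OF A']] S0 mu \<rho>pos by (smt (verit) mult_nonneg_nonneg)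
    ultimately show ?thesis using ej by simp
  qed
qed

end
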